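(* Let $(a_n)_{n\ge1}$ be an integer sequence such that $a_1=0$, $p\mid a_p$ for every prime $p$, and $a_n=a_{\operatorname{rad}(n)}$ for all $n>1$. Then $(a_n)$ is an Euler–Gauss sequence, i.e. $A_n^+\equiv A_n^-\pmod n$ for all $n\ge1$.
   Context: $\mu$ is the Möbius function and $\operatorname{rad}(n)=\prod_{p\mid n,\,p\text{ prime}}p$. For $n\ge1$, $A_n^+=\prod_{d\mid n,\ \mu(d)=1} a_{n/d}$ and $A_n^-=\prod_{d\mid n,\ \mu(d)=-1} a_{n/d}$ (empty products equal $1$). *)

theory Defs
  imports "HOL-Computational_Algebra.Computational_Algebra" "HOL-Number_Theory.Number_Theory"
begin

definition moebius :: "nat \<Rightarrow> int" where
  "moebius n = (if squarefree n then (-1) ^ card (prime_factors n) else 0)"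

definition rad :: "nat \<Rightarrow> nat" where
  "rad n = (\<Prod>p\<in>prime_factors n. p)"

definition A_plus :: "(nat \<Rightarrow> int) \<Rightarrow> nat \<Rightarrow> int" where
  "A_plus a n = (\<Prod>d\<in>{d. d dvd n \<and> moebius d = 1}. a (n div d))"

definition A_minus :: "(nat \<Rightarrow> int) \<Rightarrow> nat \<Rightarrow> int" where
  "A_minus a n = (\<Prod>d\<in>{d. d dvd n \<and> moebius d = -1}. a (n div d))"

definition euler_gauss :: "(nat \<Rightarrow> int) \<Rightarrow> bool" where
  "euler_gauss a \<longleftrightarrow> (\<forall>n\<ge>1. [A_plus a n = A_minus a n] (mod int n))"

end

theory Submission
  imports Defs
begin

lemma moeb_nz_sqf: "moebius d \<noteq> 0 \<Longrightarrow> squarefree d"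
  unfolding moebius_def by (auto split: if_splits)

lemma moeb_pm: "moebius d = 1 \<or> moebius d = -1" if "moebius d \<noteq> 0"
proof -
  have "(-1::int)^k = 1 \<or> (-1::int)^k = -1" for k :: nat
    by (cases "even k") (auto simp: neg_one_even_power neg_one_odd_power)
  then show "moebius d = 1 \<or> moebius d = -1" using that unfolding moebius_def by (auto split: if_splits)
qed

lemma rad_mult:
  assumes "prime (q::nat)" "q dvd m" "m > 0"
  shows "rad (m*q) = rad m"
proof -
  have "prime_factors (m*q) = prime_factors m \<union> prime_factors q"
    using assms by (intro prime_factors_product) auto
  also have "prime_factors q = {q}" using assms(1) by (simp add: prime_prime_factors)
  also have "prime_factors m \<union> {q} = prime_factors m"
    using assms by (auto simp: in_prime_factors_iff)
  finally show ?thesis unfolding rad_def by simp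
qed

lemma moeb_mult:
  assumes "squarefree (e::nat)" "prime q" "\<not> q dvd e"
  shows "moebius (e*q) = - moebius e"
proof -
  have cop: "coprime e q" using assms
    by (metis coprime_commute prime_imp_coprime)
  have sq: "squarefree (e*q)"
    using cop assms by (intro squarefree_mult_coprime) (auto intro: squarefree_prime)
  have e0: "e \<noteq> 0" using assms(1) using not_squarefree_0 by (metis)
  have "prime_factors (e*q) = prime_factors e \<union> prime_factors q"
    using assms e0 by (intro prime_factors_product) auto
  also have "prime_factors q = {q}" using assms(2) by (simp add: prime_prime_factors)
  finally have pf: "prime_factors (e*q) = insert q (prime_factors e)" by auto
  have "q \<notin> prime_factors e" using assms(3) by (auto simp: in_prime_factors_iff)
  then have "card (prime_factors (e*q)) = Suc (card (prime_factors e))"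
    unfolding pf by simp
  then show ?thesis unfolding moebius_def using sq assms(1) by simp
qed

lemma nonsqf_case:
  fixes a :: "nat \<Rightarrow> int"
  assumes a_rad: "\<And>n. n > 1 \<Longrightarrow> a n = a (rad n)"
    and n0: "n > 0" and q: "prime q" and q2: "q^2 dvd n"
  shows "A_plus a n = A_minus a n"
proof -
  define f where "f d = (if q dvd d then d div q else d*q)" for d
  have key: "d*q dvd n \<and> moebius (d*q) = - moebius d \<and> a (n div d) = a (n div (d*q))"
    if d: "d dvd n" "squarefree d" "\<not> q dvd d" for d
  proof -
    have cop: "coprime d q" using d q by (metis coprime_commute prime_imp_coprime)
    have cop2: "coprime d (q^2)" using cop by simp
    have "d * q^2 dvd n" using cop2 d q2 by (simp add: divides_mult)
    then obtain k where k: "n = d * q^2 * k" by auto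
    have k0: "k > 0" using k n0 by (cases k) auto
    have d0: "d > 0" using d by (cases d) auto
    have dqn: "d*q dvd n" using k by (auto simp: power2_eq_square)
    have m: "n div (d*q) = q*k" using k d0 q by (simp add: power2_eq_square prime_gt_0_nat)
    have nd: "n div d = (q*k)*q" using k d0 by (simp add: power2_eq_square)
    have q1: "q > 1" using q prime_gt_1_nat by blast
    have "q*k \<ge> q" using k0 by simp
    then have gt: "q*k > 1" using q1 by linarith
    have "(q*k)*q \<ge> q*k" using q1 by simp
    then have "(q*k)*q > 1" using gt by linarith
    then have "a (n div d) = a (rad ((q*k)*q))" using nd a_rad[of "(q*k)*q"] by simp
    also have "\<dots> = a (rad (q*k))" using q gt q1 k0 by (subst rad_mult) auto
    also have "\<dots> = a (q*k)" using a_rad[OF gt] by simp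
    finally show ?thesis using dqn moeb_mult[OF d(2) q d(3)] m by simp
  qed
  have gen: "f d dvd n \<and> moebius (f d) = - moebius d \<and> f (f d) = d \<and> a (n div f d) = a (n div d)"
    if d: "d dvd n" "moebius d \<noteq> 0" for d
  proof (cases "q dvd d")
    case True
    then obtain e where e: "d = e*q" by (metis dvdE mult.commute)
    have sqd: "squarefree d" using moeb_nz_sqf d by auto
    have sqe: "squarefree e" using sqd e squarefree_multD by blast
    have nqe: "\<not> q dvd e"
    proof
      assume "q dvd e"
      then have "q^2 dvd d" using e by (simp add: power2_eq_square mult_dvd_mono)
      then show False using sqd q squarefreeD[of d q] by (metis not_prime_unit)
    qed
    have q0: "q > 0" using q prime_gt_0_nat by blast
    have fd: "f d = e" using True e q0 by (simp add: f_def)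
    have fe: "f e = d" using nqe e by (simp add: f_def)
    have en: "e dvd n" using d e by (metis dvd_mult_left)
    from key[OF en sqe nqe] show ?thesis using fd fe e en by simp
  next
    case False
    have sqd: "squarefree d" using moeb_nz_sqf d by auto
    have q0: "q > 0" using q prime_gt_0_nat by blast
    have fd: "f d = d*q" using False by (simp add: f_def)
    have ffd: "f (f d) = d" using fd q0 by (simp add: f_def)
    from key[OF d(1) sqd False] show ?thesis using fd ffd by simp
  qed
  define P where "P = {d. d dvd n \<and> moebius d = 1}"
  define M where "M = {d. d dvd n \<and> moebius d = -1}"
  have bij: "bij_betw f P M"
  proof (rule bij_betw_byWitness[where f'=f])
    show "\<forall>x\<in>P. f (f x) = x" using gen unfolding P_def by auto
    show "\<forall>x\<in>M. f (f x) = x" using gen unfolding M_def by auto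
    show "f ` P \<subseteq> M" using gen unfolding P_def M_def by fastforce
    show "f ` M \<subseteq> P" using gen unfolding P_def M_def by fastforce
  qed
  have "A_plus a n = (\<Prod>d\<in>P. a (n div f d))"
    unfolding A_plus_def P_def using gen by (intro prod.cong) auto
  also have "\<dots> = (\<Prod>d\<in>M. a (n div d))"
    using prod.reindex_bij_betw[OF bij, of "\<lambda>d. a (n div d)"] by simp
  finally show ?thesis unfolding A_minus_def M_def .
qed

lemma sqf_case:
  fixes a :: "nat \<Rightarrow> int"
  assumes a1: "a 1 = 0" and ap: "\<And>p. prime p \<Longrightarrow> int p dvd a p"
    and n1: "n > 1" and sq: "squarefree n" and s: "s = moebius n"
  shows "(\<Prod>d\<in>{d. d dvd n \<and> moebius d = s}. a (n div d)) = 0"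
    and "int n dvd (\<Prod>d\<in>{d. d dvd n \<and> moebius d = - s}. a (n div d))"
proof -
  have n0: "n > 0" using n1 by simp
  have fin: "finite {d. d dvd n \<and> P d}" for P
    using n0 by (rule finite_subset[rotated, OF finite_divisors_nat]) auto
  show "(\<Prod>d\<in>{d. d dvd n \<and> moebius d = s}. a (n div d)) = 0"
    using n0 a1 s by (intro prod_zero[OF fin]) (rule bexI[of _ n], auto)
  define X where "X = {d. d dvd n \<and> moebius d = - s}"
  define g where "g p = n div p" for p
  have sub: "g ` prime_factors n \<subseteq> X"
  proof
    fix x assume "x \<in> g ` prime_factors n"
    then obtain p where p: "p \<in> prime_factors n" "x = n div p" unfolding g_def by auto
    have pp: "prime p" "p dvd n" using p by (auto simp: in_prime_factors_iff)
    have ne: "n = (n div p) * p" using pp by simp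
    have sqe: "squarefree (n div p)" using sq ne squarefree_multD by metis
    have nq: "\<not> p dvd (n div p)"
    proof
      assume "p dvd n div p"
      then have "p^2 dvd n" using ne by (metis dvd_mult_div_cancel mult_dvd_mono power2_eq_square dvd_refl pp(2))
      then show False using sq pp squarefreeD[of n p] by (metis not_prime_unit)
    qed
    have "moebius n = - moebius (n div p)" using moeb_mult[OF sqe pp(1) nq] ne by simp
    moreover have "n div p dvd n" using ne by (metis dvd_triv_left)
    ultimately show "x \<in> X" unfolding X_def using p s by auto
  qed
  have dd: "n div (n div x) = x" if "x dvd n" for x
  proof -
    have "n = (n div x) * x" using that by simp
    moreover have "n div x \<noteq> 0" using that n0 by (metis calculation mult_0 not_gr0)
    ultimately show ?thesis by (metis nonzero_mult_div_cancel_left)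
  qed
  have inj: "inj_on g (prime_factors n)"
  proof (rule inj_onI)
    fix p p' assume "p \<in> prime_factors n" "p' \<in> prime_factors n" "g p = g p'"
    then have h: "p dvd n" "p' dvd n" "n div p = n div p'" unfolding g_def
      by (auto simp: in_prime_factors_iff)
    have "n = (n div p) * p" "n = (n div p') * p'" using h(1,2) by simp_all
    moreover have "n div p \<noteq> 0" using h(1) n0 by (metis calculation(1) mult_0 not_gr0)
    ultimately show "p = p'" using h(3) by (metis mult_left_cancel)
  qed
  have "(\<Prod>d\<in>X. a (n div d)) = (\<Prod>d\<in>g ` prime_factors n. a (n div d)) * (\<Prod>d\<in>X - g ` prime_factors n. a (n div d))"
    using prod.subset_diff[OF sub] fin unfolding X_def by (simp add: mult.commute)
  moreover have "(\<Prod>d\<in>g ` prime_factors n. a (n div d)) = (\<Prod>p\<in>prime_factors n. a p)"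
    using prod.reindex[OF inj, of "\<lambda>d. a (n div d)"] n0 dd unfolding g_def
    by (auto intro!: prod.cong simp: in_prime_factors_iff)
  moreover have "int n dvd (\<Prod>p\<in>prime_factors n. a p)"
  proof -
    have "n = (\<Prod>p\<in>prime_factors n. p ^ multiplicity p n)" using prime_factorization_nat n0 by blast
    also have "\<dots> = (\<Prod>p\<in>prime_factors n. p)"
      using sq n0 squarefree_factorial_semiring'[of n] by (intro prod.cong) auto
    finally have "int n = int (\<Prod>p\<in>prime_factors n. p)" by (rule arg_cong)
    also have "\<dots> = (\<Prod>p\<in>prime_factors n. int p)" by (rule of_nat_prod)
    also have "\<dots> dvd (\<Prod>p\<in>prime_factors n. a p)"
      using ap by (intro prod_dvd_prod) (auto simp: in_prime_factors_iff)
    finally show ?thesis .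
  qed
  ultimately show "int n dvd (\<Prod>d\<in>{d. d dvd n \<and> moebius d = - s}. a (n div d))"
    unfolding X_def by simp
qed

theorem theorem9:
  fixes a :: "nat \<Rightarrow> int"
  assumes "a 1 = 0"
    and "\<And>p. prime p \<Longrightarrow> int p dvd a p"
    and "\<And>n. n > 1 \<Longrightarrow> a n = a (rad n)"
  shows "euler_gauss a"
  unfolding euler_gauss_def
proof (intro allI impI)
  fix n :: nat assume n: "n \<ge> 1"
  show "[A_plus a n = A_minus a n] (mod int n)"
  proof (cases "n = 1")
    case True then show ?thesis by simp
  next
    case False
    then have n1: "n > 1" using n by simp
    show ?thesis
    proof (cases "squarefree n")
      case False
      then obtain q where q: "prime q" "q^2 dvd n"
        using squarefree_factorial_semiring[of n] n1 by auto
      have "A_plus a n = A_minus a n" using nonsqf_case[of a n q, OF assms(3)] q n1 by simp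
      then show ?thesis by simp
    next
      case True
      then have "moebius n \<noteq> 0" unfolding moebius_def by simp
      then consider "moebius n = 1" | "moebius n = -1" using moeb_pm by blast
      then show ?thesis
      proof cases
        case 1
        have "A_plus a n = 0" unfolding A_plus_def
          using sqf_case(1)[OF assms(1,2) n1 True, of 1] 1 by simp
        moreover have "int n dvd A_minus a n" unfolding A_minus_def
          using sqf_case(2)[OF assms(1,2) n1 True, of 1] 1 by simp
        ultimately show ?thesis by (simp add: cong_def dvd_eq_mod_eq_0)
      next
        case 2
        have "A_minus a n = 0" unfolding A_minus_def
          using sqf_case(1)[OF assms(1,2) n1 True, of "-1"] 2 by simp
        moreover have "int n dvd A_plus a n" unfolding A_plus_def
          using sqf_case(2)[OF assms(1,2) n1 True, of "-1"] 2 by simp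
        ultimately show ?thesis by (simp add: cong_def dvd_eq_mod_eq_0)
      qed
    qed
  qed
qed

end
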